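(* Let $\mathsf V$ be a variety, $h:\mathbf F_{\mathsf V}(z)\to\prod_{k=1}^m\mathbf E_k$ an algebraic e-generalization problem, and $g:\mathbf F_{\mathsf V}(z)\to\mathbf P$, $g':\mathbf F_{\mathsf V}(z)\to\mathbf P'$ solutions of $h$. Then: (1) if $g'\sqsubseteq g$, then $\ker(g)\subseteq\ker(g')$; (2) if $\ker(g)\subseteq\ker(g')$, then $g'\sqsubseteq n_{\ker(g)}$.
   Context: $\mathbf F_{\mathsf V}(z)$ is the free algebra of the variety $\mathsf V$ on one generator $z$. An algebra is projective in $\mathsf V$ iff it is a retract of a free algebra; exact if isomorphic to a finitely generated subalgebra of a finitely generated free algebra of $\mathsf V$. An algebraic e-generalization problem is a homomorphism $h:\mathbf F_{\mathsf V}(z)\to\prod_{k=1}^m\mathbf E_k$ with each $\mathbf E_k$ 1-generated exact and each $p_k\circ h$ surjective. A solution of $h$ is a homomorphism $g:\mathbf F_{\mathsf V}(z)\to\mathbf P$, $\mathbf P$ finitely generated projective, with $f\circ g=h$ for some homomorphism $f$. For homomorphisms $g:\mathbf A\to\mathbf B$, $g':\mathbf A\to\mathbf B'$, $g\sqsubseteq g'$ iff there is a homomorphism $f:\mathbf B'\to\mathbf B$ with $f\circ g'=g$. For a congruence $\theta$, $n_\theta:\mathbf F_{\mathsf V}(z)\to\mathbf F_{\mathsf V}(z)/\theta$ is the natural epimorphism. *)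

theory Defs
  imports Main "HOL-Library.FuncSet"
begin

record ('f, 'a) alg =
  acarrier :: "'a set"
  aops :: "'f \<Rightarrow> 'a list \<Rightarrow> 'a"

definition algebra :: "('f \<Rightarrow> nat) \<Rightarrow> ('f, 'a) alg \<Rightarrow> bool" where
  "algebra ar A \<longleftrightarrow> (\<forall>f xs. length xs = ar f \<and> set xs \<subseteq> acarrier A \<longrightarrow> aops A f xs \<in> acarrier A)"

definition hom :: "('f \<Rightarrow> nat) \<Rightarrow> ('f, 'a) alg \<Rightarrow> ('f, 'b) alg \<Rightarrow> ('a \<Rightarrow> 'b) \<Rightarrow> bool" where
  "hom ar A B h \<longleftrightarrow> h ` acarrier A \<subseteq> acarrier B \<and>
     (\<forall>f xs. length xs = ar f \<and> set xs \<subseteq> acarrier A \<longrightarrow> h (aops A f xs) = aops B f (map h xs))"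

definition iso_algs :: "('f \<Rightarrow> nat) \<Rightarrow> ('f, 'a) alg \<Rightarrow> ('f, 'b) alg \<Rightarrow> bool" where
  "iso_algs ar A B \<longleftrightarrow> (\<exists>h. hom ar A B h \<and> bij_betw h (acarrier A) (acarrier B))"

definition closed_under_ops :: "('f \<Rightarrow> nat) \<Rightarrow> ('f, 'a) alg \<Rightarrow> 'a set \<Rightarrow> bool" where
  "closed_under_ops ar A S \<longleftrightarrow> (\<forall>f xs. length xs = ar f \<and> set xs \<subseteq> S \<longrightarrow> aops A f xs \<in> S)"

definition Sg :: "('f \<Rightarrow> nat) \<Rightarrow> ('f, 'a) alg \<Rightarrow> 'a set \<Rightarrow> 'a set" where
  "Sg ar A G = \<Inter>{S. G \<subseteq> S \<and> S \<subseteq> acarrier A \<and> closed_under_ops ar A S}"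

definition subalg :: "('f, 'a) alg \<Rightarrow> 'a set \<Rightarrow> ('f, 'a) alg" where
  "subalg A S = \<lparr>acarrier = S, aops = aops A\<rparr>"

definition fin_generated :: "('f \<Rightarrow> nat) \<Rightarrow> ('f, 'a) alg \<Rightarrow> bool" where
  "fin_generated ar A \<longleftrightarrow> (\<exists>G. finite G \<and> G \<subseteq> acarrier A \<and> Sg ar A G = acarrier A)"

definition one_generated :: "('f \<Rightarrow> nat) \<Rightarrow> ('f, 'a) alg \<Rightarrow> bool" where
  "one_generated ar A \<longleftrightarrow> (\<exists>e\<in>acarrier A. Sg ar A {e} = acarrier A)"

definition ker :: "('f, 'a) alg \<Rightarrow> ('a \<Rightarrow> 'b) \<Rightarrow> 'a rel" where
  "ker A g = {(x, y). x \<in> acarrier A \<and> y \<in> acarrier A \<and> g x = g y}"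

definition quot_alg :: "('f, 'a) alg \<Rightarrow> 'a rel \<Rightarrow> ('f, 'a set) alg" where
  "quot_alg A \<theta> = \<lparr>acarrier = acarrier A // \<theta>,
      aops = (\<lambda>f cs. \<theta> `` {aops A f (map (\<lambda>c. SOME x. x \<in> c) cs)})\<rparr>"

definition nat_epi :: "'a rel \<Rightarrow> 'a \<Rightarrow> 'a set" where
  "nat_epi \<theta> x = \<theta> `` {x}"

text \<open>Direct product of E_0, ..., E_(m-1) (indices shifted from 1..m to 0..m-1).\<close>
definition prod_alg :: "nat \<Rightarrow> (nat \<Rightarrow> ('f, 'e) alg) \<Rightarrow> ('f, nat \<Rightarrow> 'e) alg" where
  "prod_alg m Es = \<lparr>acarrier = PiE {..<m} (\<lambda>k. acarrier (Es k)),
      aops = (\<lambda>f xs. \<lambda>k. if k < m then aops (Es k) f (map (\<lambda>x. x k) xs) else undefined)\<rparr>"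

datatype ('f, 'v) trm = Var 'v | Fun 'f "('f, 'v) trm list"

fun wf_trm :: "('f \<Rightarrow> nat) \<Rightarrow> ('f, 'v) trm \<Rightarrow> bool" where
  "wf_trm ar (Var v) = True"
| "wf_trm ar (Fun f ts) = (length ts = ar f \<and> (\<forall>t\<in>set ts. wf_trm ar t))"

fun vars_trm :: "('f, 'v) trm \<Rightarrow> 'v set" where
  "vars_trm (Var v) = {v}"
| "vars_trm (Fun f ts) = (\<Union>t\<in>set ts. vars_trm t)"

fun eval_trm :: "('f, 'a) alg \<Rightarrow> ('v \<Rightarrow> 'a) \<Rightarrow> ('f, 'v) trm \<Rightarrow> 'a" where
  "eval_trm A \<sigma> (Var v) = \<sigma> v"
| "eval_trm A \<sigma> (Fun f ts) = aops A f (map (eval_trm A \<sigma>) ts)"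

fun subst_trm :: "('v \<Rightarrow> ('f, 'w) trm) \<Rightarrow> ('f, 'v) trm \<Rightarrow> ('f, 'w) trm" where
  "subst_trm \<sigma> (Var v) = \<sigma> v"
| "subst_trm \<sigma> (Fun f ts) = Fun f (map (subst_trm \<sigma>) ts)"

text \<open>A variety is given (Birkhoff) by a set of identities in countably many variables.\<close>
definition eq_theory :: "('f \<Rightarrow> nat) \<Rightarrow> (('f, nat) trm \<times> ('f, nat) trm) set \<Rightarrow> bool" where
  "eq_theory ar E \<longleftrightarrow> (\<forall>(s, t)\<in>E. wf_trm ar s \<and> wf_trm ar t)"

definition in_variety :: "('f \<Rightarrow> nat) \<Rightarrow> (('f, nat) trm \<times> ('f, nat) trm) set \<Rightarrow> ('f, 'a) alg \<Rightarrow> bool" where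
  "in_variety ar E A \<longleftrightarrow> algebra ar A \<and>
     (\<forall>(s, t)\<in>E. \<forall>\<sigma>. (\<forall>v. \<sigma> v \<in> acarrier A) \<longrightarrow> eval_trm A \<sigma> s = eval_trm A \<sigma> t)"

inductive eqc :: "('f \<Rightarrow> nat) \<Rightarrow> (('f, nat) trm \<times> ('f, nat) trm) set \<Rightarrow> ('f, 'v) trm \<Rightarrow> ('f, 'v) trm \<Rightarrow> bool"
  for ar E where
  eqc_refl: "wf_trm ar t \<Longrightarrow> eqc ar E t t"
| eqc_sym: "eqc ar E s t \<Longrightarrow> eqc ar E t s"
| eqc_trans: "eqc ar E s t \<Longrightarrow> eqc ar E t u \<Longrightarrow> eqc ar E s u"
| eqc_cong: "length ss = ar f \<Longrightarrow> length ts = ar f \<Longrightarrow> (\<forall>i<ar f. eqc ar E (ss ! i) (ts ! i))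
     \<Longrightarrow> eqc ar E (Fun f ss) (Fun f ts)"
| eqc_inst: "(s, t) \<in> E \<Longrightarrow> (\<forall>v. wf_trm ar (\<sigma> v)) \<Longrightarrow> eqc ar E (subst_trm \<sigma> s) (subst_trm \<sigma> t)"

definition trm_class :: "('f \<Rightarrow> nat) \<Rightarrow> (('f, nat) trm \<times> ('f, nat) trm) set \<Rightarrow> ('f, 'v) trm \<Rightarrow> ('f, 'v) trm set" where
  "trm_class ar E t = {s. eqc ar E t s}"

definition free_alg :: "('f \<Rightarrow> nat) \<Rightarrow> (('f, nat) trm \<times> ('f, nat) trm) set \<Rightarrow> 'v set \<Rightarrow> ('f, ('f, 'v) trm set) alg" where
  "free_alg ar E X = \<lparr>acarrier = {trm_class ar E t | t. wf_trm ar t \<and> vars_trm t \<subseteq> X},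
      aops = (\<lambda>f cs. trm_class ar E (Fun f (map (\<lambda>c. SOME t. t \<in> c) cs)))\<rparr>"

text \<open>P is projective in V: P is in V and a retract of a free algebra of V.
  Free generators are taken from the type 'a \<times> nat, which is large enough for any
  retract of a free algebra onto P.\<close>
definition projective :: "('f \<Rightarrow> nat) \<Rightarrow> (('f, nat) trm \<times> ('f, nat) trm) set \<Rightarrow> ('f, 'a) alg \<Rightarrow> bool" where
  "projective ar E P \<longleftrightarrow> in_variety ar E P \<and>
     (\<exists>(X :: ('a \<times> nat) set) i r. hom ar P (free_alg ar E X) i \<and> hom ar (free_alg ar E X) P r \<and>
        (\<forall>x\<in>acarrier P. r (i x) = x))"

definition exact :: "('f \<Rightarrow> nat) \<Rightarrow> (('f, nat) trm \<times> ('f, nat) trm) set \<Rightarrow> ('f, 'a) alg \<Rightarrow> bool" where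
  "exact ar E A \<longleftrightarrow> (\<exists>(n :: nat) G. finite G \<and> G \<subseteq> acarrier (free_alg ar E {..<n}) \<and>
      iso_algs ar A (subalg (free_alg ar E {..<n}) (Sg ar (free_alg ar E {..<n}) G)))"

abbreviation Fz :: "('f \<Rightarrow> nat) \<Rightarrow> (('f, nat) trm \<times> ('f, nat) trm) set \<Rightarrow> ('f, ('f, unit) trm set) alg" where
  "Fz ar E \<equiv> free_alg ar E (UNIV :: unit set)"

definition egen_problem :: "('f \<Rightarrow> nat) \<Rightarrow> (('f, nat) trm \<times> ('f, nat) trm) set \<Rightarrow> nat \<Rightarrow>
    (nat \<Rightarrow> ('f, 'e) alg) \<Rightarrow> (('f, unit) trm set \<Rightarrow> nat \<Rightarrow> 'e) \<Rightarrow> bool" where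
  "egen_problem ar E m Es h \<longleftrightarrow> hom ar (Fz ar E) (prod_alg m Es) h \<and>
     (\<forall>k<m. one_generated ar (Es k) \<and> exact ar E (Es k) \<and>
        (\<lambda>x. h x k) ` acarrier (Fz ar E) = acarrier (Es k))"

definition solution :: "('f \<Rightarrow> nat) \<Rightarrow> (('f, nat) trm \<times> ('f, nat) trm) set \<Rightarrow> nat \<Rightarrow>
    (nat \<Rightarrow> ('f, 'e) alg) \<Rightarrow> (('f, unit) trm set \<Rightarrow> nat \<Rightarrow> 'e) \<Rightarrow> ('f, 'p) alg \<Rightarrow> (('f, unit) trm set \<Rightarrow> 'p) \<Rightarrow> bool" where
  "solution ar E m Es h P g \<longleftrightarrow> fin_generated ar P \<and> projective ar E P \<and> hom ar (Fz ar E) P g \<and>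
     (\<exists>f. hom ar P (prod_alg m Es) f \<and> (\<forall>x\<in>acarrier (Fz ar E). f (g x) = h x))"

definition gen_leq :: "('f \<Rightarrow> nat) \<Rightarrow> ('f, 'a) alg \<Rightarrow> ('f, 'b) alg \<Rightarrow> ('f, 'c) alg \<Rightarrow> ('a \<Rightarrow> 'b) \<Rightarrow> ('a \<Rightarrow> 'c) \<Rightarrow> bool" where
  "gen_leq ar A B B' g g' \<longleftrightarrow> (\<exists>f. hom ar B' B f \<and> (\<forall>x\<in>acarrier A. f (g' x) = g x))"

end

theory Submission
  imports Defs
begin

lemma wf_subst: "wf_trm ar s \<Longrightarrow> (\<forall>v. wf_trm ar (\<sigma> v)) \<Longrightarrow> wf_trm ar (subst_trm \<sigma> s)"
  by (induction s) auto

lemma eqc_wf: "eqc ar E s t \<Longrightarrow> eq_theory ar E \<Longrightarrow> wf_trm ar s \<and> wf_trm ar t"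
proof (induction rule: eqc.induct)
  case (eqc_cong ss f ts)
  then show ?case by (auto simp: in_set_conv_nth)
next
  case (eqc_inst s t \<sigma>)
  then show ?case using wf_subst unfolding eq_theory_def by fastforce
qed auto

lemma Fz_closed:
  assumes eqt: "eq_theory ar E" and len: "length xs = ar f"
    and xs: "set xs \<subseteq> acarrier (Fz ar E)"
  shows "aops (Fz ar E) f xs \<in> acarrier (Fz ar E)"
proof -
  have "\<forall>c\<in>set xs. wf_trm ar (SOME t. t \<in> c)"
  proof
    fix c assume "c \<in> set xs"
    then obtain t where t: "wf_trm ar t" "c = trm_class ar E t"
      using xs by (auto simp: free_alg_def)
    then have "t \<in> c" by (simp add: trm_class_def eqc_refl)
    then have "(SOME t. t \<in> c) \<in> c" by (rule someI)
    then show "wf_trm ar (SOME t. t \<in> c)" using t eqc_wf[OF _ eqt] by (auto simp: trm_class_def)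
  qed
  then have "wf_trm ar (Fun f (map (\<lambda>c. SOME t. t \<in> c) xs))" using len by auto
  then show ?thesis by (auto simp: free_alg_def)
qed

theorem proposition4p16:
  fixes ar :: "'f \<Rightarrow> nat"
    and E :: "(('f, nat) trm \<times> ('f, nat) trm) set"
    and m :: nat
    and Es :: "nat \<Rightarrow> ('f, 'e) alg"
    and h :: "('f, unit) trm set \<Rightarrow> nat \<Rightarrow> 'e"
    and P :: "('f, 'p) alg" and g :: "('f, unit) trm set \<Rightarrow> 'p"
    and P' :: "('f, 'q) alg" and g' :: "('f, unit) trm set \<Rightarrow> 'q"
  assumes "eq_theory ar E"
    and "egen_problem ar E m Es h"
    and "solution ar E m Es h P g"
    and "solution ar E m Es h P' g'"
  shows "(gen_leq ar (Fz ar E) P' P g' g \<longrightarrow> ker (Fz ar E) g \<subseteq> ker (Fz ar E) g')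
       \<and> (ker (Fz ar E) g \<subseteq> ker (Fz ar E) g' \<longrightarrow>
            gen_leq ar (Fz ar E) P' (quot_alg (Fz ar E) (ker (Fz ar E) g)) g' (nat_epi (ker (Fz ar E) g)))"
proof (intro conjI impI)
  assume "gen_leq ar (Fz ar E) P' P g' g"
  then obtain f where f: "\<forall>x\<in>acarrier (Fz ar E). f (g x) = g' x" by (auto simp: gen_leq_def)
  show "ker (Fz ar E) g \<subseteq> ker (Fz ar E) g'"
    using f by (auto simp: ker_def) metis
next
  assume kk: "ker (Fz ar E) g \<subseteq> ker (Fz ar E) g'"
  define A where "A = Fz ar E"
  define \<theta> where "\<theta> = ker A g"
  have hg': "hom ar A P' g'" using assms(4) by (simp add: solution_def A_def)
  have cls: "\<And>x y. x \<in> acarrier A \<Longrightarrow> y \<in> \<theta> `` {x} \<Longrightarrow> y \<in> acarrier A \<and> g' y = g' x"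
    using kk unfolding \<theta>_def A_def ker_def by auto
  have rep: "\<And>x. x \<in> acarrier A \<Longrightarrow> (SOME y. y \<in> \<theta> `` {x}) \<in> \<theta> `` {x}"
  proof -
    fix x assume "x \<in> acarrier A"
    then have "x \<in> \<theta> `` {x}" by (simp add: \<theta>_def ker_def)
    then show "(SOME y. y \<in> \<theta> `` {x}) \<in> \<theta> `` {x}" by (rule someI)
  qed
  have repc: "\<And>c. c \<in> acarrier A // \<theta> \<Longrightarrow> (SOME y. y \<in> c) \<in> acarrier A \<and> (\<exists>x\<in>acarrier A. c = \<theta> `` {x} \<and> g' (SOME y. y \<in> c) = g' x)"
  proof -
    fix c assume "c \<in> acarrier A // \<theta>"
    then obtain x where x: "x \<in> acarrier A" "c = \<theta> `` {x}" by (auto simp: quotient_def)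
    then show "(SOME y. y \<in> c) \<in> acarrier A \<and> (\<exists>x\<in>acarrier A. c = \<theta> `` {x} \<and> g' (SOME y. y \<in> c) = g' x)"
      using rep[OF x(1)] cls[OF x(1)] by auto
  qed
  define F where "F = (\<lambda>c. g' (SOME y. y \<in> c))"
  have "hom ar (quot_alg A \<theta>) P' F"
    unfolding hom_def
  proof (intro conjI allI impI)
    show "F ` acarrier (quot_alg A \<theta>) \<subseteq> acarrier P'"
      using repc hg' unfolding hom_def F_def quot_alg_def by auto
  next
    fix f cs assume a: "length cs = ar f \<and> set cs \<subseteq> acarrier (quot_alg A \<theta>)"
    define xs where "xs = map (\<lambda>c. SOME x. x \<in> c) cs"
    have xsA: "set xs \<subseteq> acarrier A" using a repc by (auto simp: xs_def quot_alg_def)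
    have lx: "length xs = ar f" using a by (simp add: xs_def)
    have cl: "aops A f xs \<in> acarrier A" using Fz_closed[OF assms(1) lx] xsA by (simp add: A_def)
    have "F (aops (quot_alg A \<theta>) f cs) = g' (aops A f xs)"
      using rep[OF cl] cls[OF cl] by (simp add: F_def quot_alg_def xs_def)
    also have "\<dots> = aops P' f (map g' xs)" using hg' lx xsA by (simp add: hom_def)
    also have "map g' xs = map F cs" by (simp add: xs_def F_def)
    finally show "F (aops (quot_alg A \<theta>) f cs) = aops P' f (map F cs)" .
  qed
  moreover have "\<forall>x\<in>acarrier A. F (nat_epi \<theta> x) = g' x"
    using rep cls by (simp add: F_def nat_epi_def)
  ultimately show "gen_leq ar (Fz ar E) P' (quot_alg (Fz ar E) (ker (Fz ar E) g)) g' (nat_epi (ker (Fz ar E) g))"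
    unfolding gen_leq_def A_def \<theta>_def by blast
qed

end
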